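(* Let $\mathbf v_1$ and $\mathbf v_2$ be words. If the set of letters occurring in $\mathbf v_2$ is $\{x_1,x_2,\dots,x_n\}$ (with $x_1,\dots,x_n$ distinct) and each of these letters occurs in $\mathbf v_1$, then the identity $\mathbf v_1\mathbf v_2\approx\mathbf v_1x_1x_2\cdots x_n$ holds in the variety $\mathbf O$.
   Context: Words are elements of the free monoid over a countably infinite alphabet. $\mathbf O$ is the monoid variety defined by the identities $x^2y^2\approx y^2x^2$ and $xzxyxty\approx xzyxty$. *)

theory Defs
  imports Main
begin

definition word_eval :: "(nat \<Rightarrow> 'a::monoid_mult) \<Rightarrow> nat list \<Rightarrow> 'a" where
  "word_eval h w = prod_list (map h w)"

definition in_O :: "'a::monoid_mult itself \<Rightarrow> bool" where
  "in_O _ \<longleftrightarrow>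
     (\<forall>x y :: 'a. x * x * y * y = y * y * x * x) \<and>
     (\<forall>x y z t :: 'a. x * z * x * y * x * t * y = x * z * y * x * t * y)"

text \<open>An identity u = v holds in O iff it holds in every monoid of O under every
  assignment; the type variable is universally quantified at theorem level.\<close>
definition holds_in :: "'a::monoid_mult itself \<Rightarrow> nat list \<Rightarrow> nat list \<Rightarrow> bool" where
  "holds_in T u v \<longleftrightarrow> (\<forall>h :: nat \<Rightarrow> 'a. word_eval h u = word_eval h v)"

end

theory Submission
  imports Defs
begin

definition cont :: "'a::monoid_mult \<Rightarrow> 'a \<Rightarrow> bool" where
  "cont A a \<longleftrightarrow> (\<exists>p q. A = p * a * q)"

lemma cont_mult: "cont A a \<Longrightarrow> cont (A * m) a"
  unfolding cont_def by (metis mult.assoc)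

lemma cont_self: "cont (A * a) a"
  unfolding cont_def by (metis mult_1_right)

lemma O_dup:
  assumes "in_O TYPE('a::monoid_mult)" "cont (A::'a) a"
  shows "A * a * a * s = A * a * s"
proof -
  obtain p q where A: "A = p * a * q" using assms(2) unfolding cont_def by blast
  have "a * q * a * 1 * a * s * 1 = a * q * 1 * a * s * 1"
    using assms(1) unfolding in_O_def by blast
  then have "a * q * a * a * s = a * q * a * s" by simp
  then have "p * (a * q * a * a * s) = p * (a * q * a * s)" by simp
  then show ?thesis using A by (simp add: mult.assoc)
qed

lemma O_comm:
  assumes O: "in_O TYPE('a::monoid_mult)" and ca: "cont (A::'a) a" and cb: "cont A b"
  shows "A * a * b * s = A * b * a * s"
proof -
  have sq: "a * a * b * b = b * b * a * a" using O unfolding in_O_def by blast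
  have "A * a * b * s = A * a * a * (b * s)" using O_dup[OF O ca, of "b * s"] by (simp add: mult.assoc)
  also have "\<dots> = (A * a * a) * b * b * s"
    using O_dup[OF O cont_mult[OF cb, of "a * a"], of s] by (simp add: mult.assoc)
  also have "\<dots> = A * (a * a * b * b) * s" by (simp add: mult.assoc)
  also have "\<dots> = A * (b * b * a * a) * s" by (simp add: sq)
  also have "\<dots> = (A * b * b) * a * a * s" by (simp add: mult.assoc)
  also have "\<dots> = A * b * b * a * s"
    using O_dup[OF O cont_mult[OF ca, of "b * b"], of s] by (simp add: mult.assoc)
  also have "\<dots> = A * b * a * s"
    using O_dup[OF O cb, of "a * s"] by (simp add: mult.assoc)
  finally show ?thesis .
qed

lemma cont_W:
  assumes "c \<in> set v1"
  shows "cont (prod_list (map h v1)) (h c)"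
proof -
  obtain p q where "v1 = p @ c # q" using assms split_list by metis
  then show ?thesis unfolding cont_def by (auto simp: mult.assoc)
qed

lemma move1:
  assumes O: "in_O TYPE('a::monoid_mult)" and u: "set u \<subseteq> set v1" and c: "c \<in> set v1"
  shows "prod_list (map (h::nat \<Rightarrow> 'a) v1) * m * prod_list (map h u) * h c
       = prod_list (map h v1) * m * h c * prod_list (map h u)"
  using u
proof (induction u arbitrary: m)
  case Nil then show ?case by simp
next
  case (Cons b u)
  let ?W = "prod_list (map h v1)"
  have "?W * m * prod_list (map h (b # u)) * h c = ?W * (m * h b) * prod_list (map h u) * h c"
    by (simp add: mult.assoc)
  also have "\<dots> = ?W * (m * h b) * h c * prod_list (map h u)" using Cons by simp
  also have "\<dots> = ?W * m * h b * h c * prod_list (map h u)" by (simp add: mult.assoc)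
  also have "\<dots> = ?W * m * h c * h b * prod_list (map h u)"
  proof -
    have bv: "b \<in> set v1" using Cons by simp
    have c1: "cont (?W * m) (h c)" by (rule cont_mult[OF cont_W[OF c]])
    have c2: "cont (?W * m) (h b)" by (rule cont_mult[OF cont_W[OF bv]])
    show ?thesis using O_comm[OF O c1 c2] by simp
  qed
  also have "\<dots> = ?W * m * h c * prod_list (map h (b # u))" by (simp add: mult.assoc)
  finally show ?case .
qed

lemma move:
  assumes O: "in_O TYPE('a::monoid_mult)" and u: "set u \<subseteq> set v1" and v: "set v \<subseteq> set v1"
  shows "prod_list (map (h::nat \<Rightarrow> 'a) v1) * m * prod_list (map h u) * prod_list (map h v)
       = prod_list (map h v1) * m * prod_list (map h v) * prod_list (map h u)"
  using v
proof (induction v arbitrary: m)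
  case Nil then show ?case by simp
next
  case (Cons c v)
  let ?W = "prod_list (map h v1)"
  have "?W * m * prod_list (map h u) * prod_list (map h (c # v))
      = (?W * m * prod_list (map h u) * h c) * prod_list (map h v)" by (simp add: mult.assoc)
  also have "\<dots> = ?W * (m * h c) * prod_list (map h u) * prod_list (map h v)"
    using move1[OF O u, of c h m] Cons by (simp add: mult.assoc)
  also have "\<dots> = ?W * (m * h c) * prod_list (map h v) * prod_list (map h u)"
    using Cons by simp
  finally show ?case by (simp add: mult.assoc)
qed

lemma absorb:
  assumes O: "in_O TYPE('a::monoid_mult)" and u: "set u \<subseteq> set v1" and c: "c \<in> set u"
  shows "prod_list (map (h::nat \<Rightarrow> 'a) v1) * m * prod_list (map h u) * h c
       = prod_list (map h v1) * m * prod_list (map h u)"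
proof -
  let ?W = "prod_list (map h v1)"
  obtain p q where uq: "u = p @ c # q" using c split_list by metis
  have cv: "c \<in> set v1" using u c by auto
  have q: "set q \<subseteq> set v1" using u uq by auto
  have "?W * m * prod_list (map h u) * h c = ?W * (m * prod_list (map h p) * h c) * prod_list (map h q) * h c"
    using uq by (simp add: mult.assoc)
  also have "\<dots> = ?W * (m * prod_list (map h p) * h c) * h c * prod_list (map h q)"
    using move1[OF O q cv] by simp
  also have "\<dots> = (?W * (m * prod_list (map h p))) * h c * h c * prod_list (map h q)"
    by (simp add: mult.assoc)
  also have "\<dots> = (?W * (m * prod_list (map h p))) * h c * prod_list (map h q)"
    using O_dup[OF O cont_mult[OF cont_W[OF cv]]] by simp
  also have "\<dots> = ?W * m * prod_list (map h u)" using uq by (simp add: mult.assoc)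
  finally show ?thesis .
qed

lemma absorb_list:
  assumes O: "in_O TYPE('a::monoid_mult)" and u': "set u' \<subseteq> set v1" and u: "set u \<subseteq> set u'"
  shows "prod_list (map (h::nat \<Rightarrow> 'a) v1) * m * prod_list (map h u') * prod_list (map h u)
       = prod_list (map h v1) * m * prod_list (map h u')"
  using u
proof (induction u)
  case Nil then show ?case by simp
next
  case (Cons a u)
  let ?W = "prod_list (map h v1)"
  have "?W * m * prod_list (map h u') * prod_list (map h (a # u))
      = (?W * m * prod_list (map h u') * h a) * prod_list (map h u)" by (simp add: mult.assoc)
  also have "\<dots> = ?W * m * prod_list (map h u') * prod_list (map h u)"
    using absorb[OF O u', of a h m] Cons by simp
  finally show ?case using Cons by simp
qed

theorem lemma3p4:
  fixes v1 v2 xs :: "nat list"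
  assumes "distinct xs"
    and "set xs = set v2"
    and "set v2 \<subseteq> set v1"
    and "in_O TYPE('a::monoid_mult)"
  shows "holds_in TYPE('a) (v1 @ v2) (v1 @ xs)"
  unfolding holds_in_def word_eval_def
proof
  fix h :: "nat \<Rightarrow> 'a"
  let ?W = "prod_list (map h v1)"
  have x: "set xs \<subseteq> set v1" using assms by auto
  have "?W * prod_list (map h v2) = ?W * 1 * prod_list (map h v2) * prod_list (map h xs)"
    using absorb_list[OF assms(4) assms(3), of xs h 1] assms(2) by simp
  also have "\<dots> = ?W * 1 * prod_list (map h xs) * prod_list (map h v2)"
    using move[OF assms(4) assms(3) x, of h 1] by simp
  also have "\<dots> = ?W * prod_list (map h xs)"
    using absorb_list[OF assms(4) x, of v2 h 1] assms(2) by simp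
  finally show "prod_list (map h (v1 @ v2)) = prod_list (map h (v1 @ xs))" by simp
qed

end
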